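(* Let $N_1>0$, $N_2>0$, $\chi>0$ and set $\alpha=\pi\big(\sqrt{N_2/\pi}+N_1/2\big)^2$, $\beta=\alpha/\sqrt{\pi N_2}$, $\tau=\sqrt{\pi N_2}\,N_1$, $\rho=1+N_2/\tau$ (so $\rho>1$). Define on $(0,1/\rho)$ $$S(\phi)=\frac{\phi}{\tau}\ln\frac{\alpha\phi}{\tau}+\frac{\phi}{N_1}\ln\frac{\beta\phi}{\tau}+(1-\rho\phi)\ln(1-\rho\phi),\qquad H(\phi)=\chi\phi(1-\rho\phi),$$ and $\kappa(\phi)=\dfrac{1}{36\phi(1-\phi)}$. Then: (1) $S$ and $-H$ are both convex on $(0,1/\rho)$; (2) $K(u,v):=\kappa(u)v^2$ is convex on $(0,1/\rho)\times\mathbb{R}$; (3) $K_1(u,v):=\big(\kappa(u)-\tfrac{1}{36}\big)v^2$ is convex on $(0,1/\rho)\times\mathbb{R}$ and $K_2(v):=\tfrac{1}{36}v^2$ is convex on $\mathbb{R}$. *)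

theory Defs
  imports "HOL-Analysis.Analysis"
begin

definition alpha_par :: "real \<Rightarrow> real \<Rightarrow> real" where
  "alpha_par N1 N2 = pi * (sqrt (N2 / pi) + N1 / 2)^2"

definition beta_par :: "real \<Rightarrow> real \<Rightarrow> real" where
  "beta_par N1 N2 = alpha_par N1 N2 / sqrt (pi * N2)"

definition tau_par :: "real \<Rightarrow> real \<Rightarrow> real" where
  "tau_par N1 N2 = sqrt (pi * N2) * N1"

definition rho_par :: "real \<Rightarrow> real \<Rightarrow> real" where
  "rho_par N1 N2 = 1 + N2 / tau_par N1 N2"

definition S_fun :: "real \<Rightarrow> real \<Rightarrow> real \<Rightarrow> real" where
  "S_fun N1 N2 \<phi> =
     \<phi> / tau_par N1 N2 * ln (alpha_par N1 N2 * \<phi> / tau_par N1 N2)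
   + \<phi> / N1 * ln (beta_par N1 N2 * \<phi> / tau_par N1 N2)
   + (1 - rho_par N1 N2 * \<phi>) * ln (1 - rho_par N1 N2 * \<phi>)"

definition H_fun :: "real \<Rightarrow> real \<Rightarrow> real \<Rightarrow> real \<Rightarrow> real" where
  "H_fun N1 N2 chi \<phi> = chi * \<phi> * (1 - rho_par N1 N2 * \<phi>)"

definition kappa :: "real \<Rightarrow> real" where
  "kappa \<phi> = 1 / (36 * \<phi> * (1 - \<phi>))"

end

theory Submission
  imports Defs
begin

lemma conv2:
  fixes f f' f'' :: "real \<Rightarrow> real"
  assumes d1: "\<And>x. a<x \<Longrightarrow> x<b \<Longrightarrow> (f has_real_derivative f' x) (at x)"
    and d2: "\<And>x. a<x \<Longrightarrow> x<b \<Longrightarrow> (f' has_real_derivative f'' x) (at x)"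
    and nn: "\<And>x. a<x \<Longrightarrow> x<b \<Longrightarrow> f'' x \<ge> 0"
  shows "convex_on {a<..<b} f"
proof (rule convex_on_realI[where f'=f'])
  show "connected {a<..<b}" by simp
  show "\<And>x. x \<in> {a<..<b} \<Longrightarrow> (f has_real_derivative f' x) (at x)" using d1 by auto
  fix x y assume xy: "x \<in> {a<..<b}" "y \<in> {a<..<b}" "x \<le> y"
  show "f' x \<le> f' y"
  proof (rule DERIV_nonneg_imp_increasing_open[OF xy(3)])
    fix z assume "x < z" "z < y"
    then show "\<exists>l. (f' has_real_derivative l) (at z) \<and> 0 \<le> l"
      using xy d2 nn by (metis greaterThanLessThan_iff less_trans)
  next
    show "continuous_on {x..y} f'"
      apply (rule continuous_at_imp_continuous_on)
      using xy by (auto intro!: DERIV_isCont[OF d2])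
  qed
qed

lemma joint:
  fixes w :: "real \<Rightarrow> real" and I :: "real set"
  assumes cI: "convex I" and cw: "concave_on I w" and pos: "\<And>u. u \<in> I \<Longrightarrow> w u > 0"
  shows "convex_on (I \<times> UNIV) (\<lambda>(u, v). v^2 / w u)"
proof (rule convex_onI)
  show "convex (I \<times> (UNIV::real set))" using cI by (simp add: convex_Times)
  fix t :: real and x y :: "real \<times> real"
  assume t: "0 < t" "t < 1" and x: "x \<in> I \<times> UNIV" and y: "y \<in> I \<times> UNIV"
  obtain u1 v1 where x1: "x = (u1, v1)" by fastforce
  obtain u2 v2 where y1: "y = (u2, v2)" by fastforce
  have u1: "u1 \<in> I" and u2: "u2 \<in> I" using x y x1 y1 by auto
  define s where "s = 1 - t"
  have s: "s > 0" using t s_def by simp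
  have w1: "w u1 > 0" and w2: "w u2 > 0" using pos u1 u2 by auto
  have Wge: "w (s * u1 + t * u2) \<ge> s * w u1 + t * w u2"
    using concave_onD[OF cw, of t u1 u2] t u1 u2 s_def by simp
  have W'pos: "s * w u1 + t * w u2 > 0" using s t w1 w2 by (simp add: add_pos_pos)
  have "(s * v1 + t * v2)^2 / w (s * u1 + t * u2) \<le> (s * v1 + t * v2)^2 / (s * w u1 + t * w u2)"
    by (rule divide_left_mono) (use Wge W'pos in auto)
  also have "\<dots> \<le> s * (v1^2 / w u1) + t * (v2^2 / w u2)"
  proof -
    have key: "(s * v1 + t * v2)^2 * (w u1 * w u2) \<le> (s * v1^2 * w u2 + t * v2^2 * w u1) * (s * w u1 + t * w u2)"
    proof -
      have "(s * v1^2 * w u2 + t * v2^2 * w u1) * (s * w u1 + t * w u2) - (s * v1 + t * v2)^2 * (w u1 * w u2)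
            = s * t * (v1 * w u2 - v2 * w u1)^2"
        by (simp add: power2_eq_square algebra_simps)
      moreover have "s * t * (v1 * w u2 - v2 * w u1)^2 \<ge> 0" using s t by simp
      ultimately show ?thesis by linarith
    qed
    have "s * (v1^2 / w u1) + t * (v2^2 / w u2) = (s * v1^2 * w u2 + t * v2^2 * w u1) / (w u1 * w u2)"
      using w1 w2 by (simp add: field_simps)
    moreover have "(s * v1 + t * v2)^2 / (s * w u1 + t * w u2) \<le> (s * v1^2 * w u2 + t * v2^2 * w u1) / (w u1 * w u2)"
      using key W'pos w1 w2 by (simp add: divide_simps mult.commute)
    ultimately show ?thesis by simp
  qed
  finally show "(\<lambda>(u, v). v^2 / w u) ((1 - t) *\<^sub>R x + t *\<^sub>R y) \<le> (1 - t) * (\<lambda>(u, v). v^2 / w u) x + t * (\<lambda>(u, v). v^2 / w u) y"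
    using x1 y1 s_def by simp
qed


lemma convex_on_cong_set:
  assumes "convex_on S f" "\<And>x. x \<in> S \<Longrightarrow> f x = g x"
  shows "convex_on S g"
  using assms unfolding convex_on_def
  by (smt (verit) convex_def)

lemma S_conv:
  fixes A B T N R :: real
  assumes "A > 0" "B > 0" "T > 0" "N > 0" "R > 0"
  shows "convex_on {0<..<1/R} (\<lambda>x. x / T * ln (A * x / T) + x / N * ln (B * x / T) + (1 - R * x) * ln (1 - R * x))"
proof (rule conv2[where f'="\<lambda>x. (ln (A * x / T) + 1) / T + (ln (B * x / T) + 1) / N - R * (ln (1 - R * x) + 1)"
       and f''="\<lambda>x. 1 / (T * x) + 1 / (N * x) + R^2 / (1 - R * x)"])
  fix x :: real assume x: "0 < x" "x < 1/R"
  have p1: "A * x / T > 0" "B * x / T > 0" using assms x by auto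
  have p2: "1 - R * x > 0" using x assms by (simp add: field_simps)
  show "((\<lambda>x. x / T * ln (A * x / T) + x / N * ln (B * x / T) + (1 - R * x) * ln (1 - R * x)) has_real_derivative
      (ln (A * x / T) + 1) / T + (ln (B * x / T) + 1) / N - R * (ln (1 - R * x) + 1)) (at x)"
    apply (rule DERIV_cong)
    apply (intro derivative_eq_intros refl)
    using assms x p1 p2 apply simp_all
    by (simp add: field_simps power2_eq_square)
  show "((\<lambda>x. (ln (A * x / T) + 1) / T + (ln (B * x / T) + 1) / N - R * (ln (1 - R * x) + 1)) has_real_derivative
      1 / (T * x) + 1 / (N * x) + R^2 / (1 - R * x)) (at x)"
    apply (rule DERIV_cong)
    apply (intro derivative_eq_intros refl)
    using assms x p1 p2 apply simp_all
    by (simp add: field_simps power2_eq_square)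
  show "0 \<le> 1 / (T * x) + 1 / (N * x) + R^2 / (1 - R * x)"
    using assms x p2 by simp
qed

lemma w1_conc:
  fixes R :: real
  shows "concave_on {0<..<1/R} (\<lambda>u. 36 * u * (1 - u))"
  unfolding concave_on_def
proof (rule conv2[where f'="\<lambda>x. 72 * x - 36" and f''="\<lambda>x. 72"])
  fix x :: real
  show "((\<lambda>u. - (36 * u * (1 - u))) has_real_derivative 72 * x - 36) (at x)"
    apply (rule DERIV_cong)
    apply (intro derivative_eq_intros refl)
    apply simp_all
    by (simp add: algebra_simps)
  show "((\<lambda>x. 72 * x - 36) has_real_derivative 72) (at x)"
    by (auto intro!: derivative_eq_intros)
qed simp

lemma q_pos: "1 - x + x^2 > (0::real)"
proof -
  have "1 - x + x^2 = (x - 1/2)^2 + 3/4" by (simp add: power2_eq_square algebra_simps)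
  moreover have "(x - 1/2)^2 \<ge> 0" by simp
  ultimately show ?thesis by linarith
qed

lemma aux1:
  fixes q x :: real
  assumes "q \<noteq> 0"
  shows "0 - (0 * q - 36 * (0 - 1 + 2 * (1 * x))) / (q * q) = (72 * x - 36) / q^2"
  using assms by (simp add: power2_eq_square field_simps)

lemma aux2:
  fixes q x :: real
  assumes q: "q \<noteq> 0" and hq: "q - (2*x-1)^2 = 3*x*(1-x)"
  shows "((0 * (2 * x - 1) + (0 * x + 1 * 2 - 0) * 36) * q^2 -
     (72 * x - 36) * (2 * ((0 - 1 + 2 * (1 * x)) * q))) / q ^ 4 =
    216 * x * (1 - x) / q ^ 3"
proof -
  have "(0 * (2 * x - 1) + (0 * x + 1 * 2 - 0) * 36) * q^2 -
     (72 * x - 36) * (2 * ((0 - 1 + 2 * (1 * x)) * q)) = 72 * q * (q - (2*x-1)^2)"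
    by (simp add: power2_eq_square algebra_simps)
  also have "\<dots> = (216 * x * (1 - x)) * q" using hq by simp
  finally have e: "(0 * (2 * x - 1) + (0 * x + 1 * 2 - 0) * 36) * q^2 -
     (72 * x - 36) * (2 * ((0 - 1 + 2 * (1 * x)) * q)) = (216 * x * (1 - x)) * q" .
  have "q ^ 4 = q ^ 3 * q" by (simp add: power_Suc2 numeral_eq_Suc)
  then show ?thesis unfolding e using q by simp
qed

lemma w2_conc:
  fixes R :: real
  assumes R1: "R \<ge> 1"
  shows "concave_on {0<..<1/R} (\<lambda>u. 36 * u * (1 - u) / (1 - u + u^2))"
  unfolding concave_on_def
proof (rule convex_on_cong_set)
  show "convex_on {0<..<1/R} (\<lambda>x. 36 - 36 / (1 - x + x^2))"
  proof (rule conv2[where f'="\<lambda>x. 36 * (2 * x - 1) / (1 - x + x^2)^2"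
        and f''="\<lambda>x. 216 * x * (1 - x) / (1 - x + x^2)^3"])
    fix x :: real
    assume x: "0 < x" "x < 1/R"
    have q: "1 - x + x^2 \<noteq> 0" using q_pos[of x] by simp
    show "((\<lambda>x. 36 - 36 / (1 - x + x^2)) has_real_derivative 36 * (2 * x - 1) / (1 - x + x^2)^2) (at x)"
      apply (rule DERIV_cong)
      apply (intro derivative_eq_intros refl)
      using q apply simp_all
      using aux1[OF q] by simp
    show "((\<lambda>x. 36 * (2 * x - 1) / (1 - x + x^2)^2) has_real_derivative 216 * x * (1 - x) / (1 - x + x^2)^3) (at x)"
      apply (rule DERIV_cong)
      apply (intro derivative_eq_intros refl)
      using q apply simp_all
      by (rule aux2) (use q in \<open>auto simp: power2_eq_square algebra_simps\<close>)
    have "1/R \<le> 1" using R1 by simp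
    then have "x < 1" using x by linarith
    then show "0 \<le> 216 * x * (1 - x) / (1 - x + x^2)^3"
      using x q_pos[of x] by simp
  qed
  fix x :: real
  show "36 - 36 / (1 - x + x^2) = - (36 * x * (1 - x) / (1 - x + x^2))"
    using q_pos[of x] by (simp add: field_simps power2_eq_square)
qed

theorem proposition3p1:
  fixes N1 N2 chi :: real
  assumes "N1 > 0" and "N2 > 0" and "chi > 0"
  shows "rho_par N1 N2 > 1
    \<and> convex_on {0<..<1 / rho_par N1 N2} (S_fun N1 N2)
    \<and> convex_on {0<..<1 / rho_par N1 N2} (\<lambda>\<phi>. - H_fun N1 N2 chi \<phi>)
    \<and> convex_on ({0<..<1 / rho_par N1 N2} \<times> UNIV) (\<lambda>(u, v). kappa u * v^2)
    \<and> convex_on ({0<..<1 / rho_par N1 N2} \<times> UNIV) (\<lambda>(u, v). (kappa u - 1/36) * v^2)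
    \<and> convex_on UNIV (\<lambda>v::real. (1/36) * v^2)"
proof -
  define T where "T = tau_par N1 N2"
  define R where "R = rho_par N1 N2"
  define A where "A = alpha_par N1 N2"
  define B where "B = beta_par N1 N2"
  have Tp: "T > 0" using assms unfolding T_def tau_par_def by simp
  have R1: "R > 1" using assms Tp unfolding R_def rho_par_def T_def[symmetric] by simp
  have "sqrt (N2 / pi) + N1 / 2 > 0" using assms by (simp add: add_pos_pos)
  then have Ap: "A > 0" unfolding A_def alpha_par_def by simp
  have Bp: "B > 0" using assms Ap unfolding B_def beta_par_def A_def[symmetric] by simp
  define I where "I = {0<..<1 / R}"
  have cI: "convex I" unfolding I_def by simp
  have I01: "\<And>u. u \<in> I \<Longrightarrow> 0 < u \<and> u < 1"
  proof -
    fix u assume "u \<in> I"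
    then have "0 < u" "u < 1/R" unfolding I_def by auto
    moreover have "1/R < 1" using R1 by simp
    ultimately show "0 < u \<and> u < 1" by linarith
  qed
  have c1: "convex_on I (S_fun N1 N2)"
  proof -
    have "S_fun N1 N2 = (\<lambda>x. x / T * ln (A * x / T) + x / N1 * ln (B * x / T) + (1 - R * x) * ln (1 - R * x))"
      by (rule ext) (simp add: S_fun_def T_def A_def B_def R_def)
    then show ?thesis unfolding I_def using S_conv[OF Ap Bp Tp assms(1)] R1 by simp
  qed
  have c2: "convex_on I (\<lambda>\<phi>. - H_fun N1 N2 chi \<phi>)"
  proof -
    have e: "(\<lambda>\<phi>. - H_fun N1 N2 chi \<phi>) = (\<lambda>x. - (chi * x * (1 - R * x)))"
      by (rule ext) (simp add: H_fun_def R_def)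
    have "convex_on {0<..<1/R} (\<lambda>x. - (chi * x * (1 - R * x)))"
    proof (rule conv2[where f'="\<lambda>x. 2 * chi * R * x - chi" and f''="\<lambda>x. 2 * chi * R"])
      fix x :: real
      show "((\<lambda>x. - (chi * x * (1 - R * x))) has_real_derivative 2 * chi * R * x - chi) (at x)"
        apply (rule DERIV_cong)
        apply (intro derivative_eq_intros refl)
        apply simp_all
        by (simp add: algebra_simps)
      show "((\<lambda>x. 2 * chi * R * x - chi) has_real_derivative 2 * chi * R) (at x)"
        by (auto intro!: derivative_eq_intros)
      show "0 \<le> 2 * chi * R" using assms R1 by simp
    qed
    then show ?thesis unfolding I_def e .
  qed
  have c3: "convex_on (I \<times> UNIV) (\<lambda>(u, v). kappa u * v^2)"
  proof -
    have "convex_on (I \<times> UNIV) (\<lambda>(u, v). v^2 / (36 * u * (1 - u)))"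
      by (rule joint[OF cI]) (use w1_conc[of R] I01 in \<open>auto simp: I_def\<close>)
    moreover have "(\<lambda>(u, v). v^2 / (36 * u * (1 - u))) = (\<lambda>(u, v). kappa u * v^2)"
      by (auto simp: kappa_def)
    ultimately show ?thesis by simp
  qed
  have c4: "convex_on (I \<times> UNIV) (\<lambda>(u, v). (kappa u - 1/36) * v^2)"
  proof (rule convex_on_cong_set)
    show "convex_on (I \<times> UNIV) (\<lambda>(u, v). v^2 / (36 * u * (1 - u) / (1 - u + u^2)))"
    proof (rule joint[OF cI])
      show "concave_on I (\<lambda>u. 36 * u * (1 - u) / (1 - u + u^2))"
        unfolding I_def using w2_conc R1 by simp
      fix u assume "u \<in> I"
      then show "0 < 36 * u * (1 - u) / (1 - u + u^2)"
        using I01 q_pos[of u] by simp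
    qed
    fix x :: "real \<times> real" assume "x \<in> I \<times> UNIV"
    then obtain u v where x: "x = (u, v)" "u \<in> I" by auto
    then have u: "0 < u" "u < 1" using I01 by auto
    have "(kappa u - 1/36) * v^2 = v^2 / (36 * u * (1 - u) / (1 - u + u^2))"
      using u q_pos[of u] by (simp add: kappa_def field_simps power2_eq_square)
    then show "(\<lambda>(u, v). v^2 / (36 * u * (1 - u) / (1 - u + u^2))) x = (\<lambda>(u, v). (kappa u - 1/36) * v^2) x"
      using x by simp
  qed
  have c5: "convex_on UNIV (\<lambda>v::real. (1/36) * v^2)"
    using convex_on_cmul[OF _ convex_power2, of "1/36"] by simp
  show ?thesis using R1 c1 c2 c3 c4 c5 unfolding I_def R_def by simp
qed

end
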